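(* For $k\in\{1,5\}$ and $d_2$ an even integer, let $S_{k,d_2}$ be the filtered $\lambda$-ring structure on $\mathbf{Z}[x]/(x^4)$ with Adams operations $\psi^p(x)=p^2x+\frac{kp^2(p^2-1)}{12}x^2+d_px^3$ for all primes $p$, where for odd primes $p$, $d_p=\frac{p^2(p^4-1)d_2}{60}+\frac{k^2p^2(p^2-1)(p^2-4)}{360}$. Then $S_{k,d_2}$ and $S_{k',d'_2}$ are isomorphic filtered $\lambda$-rings if and only if $k=k'$ and $d_2\equiv d'_2\pmod{60}$.
   Context: A (special) $\lambda$-ring is a commutative ring with operations $\lambda^i$ satisfying the Atiyah–Tall axioms; a filtered $\lambda$-ring is a $\lambda$-ring with decreasing filtration by ideals closed under $\lambda^i$, $i\ge1$; isomorphisms are filtration-preserving $\lambda$-ring isomorphisms. $\mathbf{Z}[x]/(x^4)$ is filtered with $x$ in a fixed positive filtration $d$. These polynomials do define filtered $\lambda$-ring structures. *)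

theory Defs
  imports "HOL-Computational_Algebra.Polynomial" "HOL-Computational_Algebra.Primes"
          "HOL-Library.Multiset"
begin

text \<open>The ring Z[x]/(x^4), realised inside Q[x] by canonical representatives
  (polynomials of degree < 4 with integer coefficients); products are
  truncated modulo x^4.  Rational coefficients are only used so that the
  Newton recursion (which divides by n) can be written down; the lambda
  operations of the structures considered land in the integral carrier.\<close>

definition trunc4 :: "rat poly \<Rightarrow> rat poly" where
  "trunc4 p = p mod monom 1 4"

definition Zx4 :: "rat poly set" where
  "Zx4 = {p. degree p < 4 \<and> (\<forall>i. coeff p i \<in> \<int>)}"

definition mul4 :: "rat poly \<Rightarrow> rat poly \<Rightarrow> rat poly" where
  "mul4 a b = trunc4 (a * b)"

text \<open>Filtration with x in filtration degree d:  F^j = ideal (x^m) with m*d \<ge> j.\<close>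
definition filt :: "nat \<Rightarrow> nat \<Rightarrow> rat poly set" where
  "filt d j = {a \<in> Zx4. \<forall>i. i * d < j \<longrightarrow> coeff a i = 0}"

definition dcoef :: "int \<Rightarrow> int \<Rightarrow> nat \<Rightarrow> rat" where
  "dcoef k d2 p = (if p = 2 then of_int d2
     else of_nat (p^2 * (p^4 - 1)) * of_int d2 / 60
          + of_int (k^2) * of_nat (p^2 * (p^2 - 1)) * (of_nat p ^ 2 - 4) / 360)"

definition psi_prime :: "int \<Rightarrow> int \<Rightarrow> nat \<Rightarrow> rat poly" where
  "psi_prime k d2 p =
     [: 0, of_nat (p^2), of_int k * of_nat (p^2 * (p^2 - 1)) / 12, dcoef k d2 p :]"

text \<open>psi^n(x) for arbitrary n \<ge> 1, via psi^{mn} = psi^m psi^n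
  (applying psi^p to u amounts to substituting psi^p(x) for x in u).\<close>
definition psi_x :: "int \<Rightarrow> int \<Rightarrow> nat \<Rightarrow> rat poly" where
  "psi_x k d2 n = fold (\<lambda>p u. trunc4 (pcompose u (psi_prime k d2 p)))
       (sorted_list_of_multiset (prime_factorization n)) [:0, 1:]"

definition adams :: "int \<Rightarrow> int \<Rightarrow> nat \<Rightarrow> rat poly \<Rightarrow> rat poly" where
  "adams k d2 n a = trunc4 (pcompose a (psi_x k d2 n))"

text \<open>The list [lambda^0(a), ..., lambda^n(a)] via Newton's identities
  m lambda^m = sum_{i=1..m} (-1)^(i-1) psi^i lambda^(m-i).\<close>
fun lams :: "int \<Rightarrow> int \<Rightarrow> nat \<Rightarrow> rat poly \<Rightarrow> rat poly list" where
  "lams k d2 0 a = [1]"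
| "lams k d2 (Suc m) a = (let L = lams k d2 m a in
     L @ [smult (1 / of_nat (Suc m))
            (\<Sum>i\<in>{1..Suc m}. smult ((-1) ^ (i - 1))
                (mul4 (adams k d2 i a) (L ! (Suc m - i))))])"

definition lam :: "int \<Rightarrow> int \<Rightarrow> nat \<Rightarrow> rat poly \<Rightarrow> rat poly" where
  "lam k d2 n a = lams k d2 n a ! n"

definition filt_lambda_iso ::
    "nat \<Rightarrow> int \<Rightarrow> int \<Rightarrow> int \<Rightarrow> int \<Rightarrow> (rat poly \<Rightarrow> rat poly) \<Rightarrow> bool" where
  "filt_lambda_iso d k d2 k' d2' f \<longleftrightarrow>
     bij_betw f Zx4 Zx4
   \<and> f 1 = 1
   \<and> (\<forall>a\<in>Zx4. \<forall>b\<in>Zx4. f (a + b) = f a + f b)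
   \<and> (\<forall>a\<in>Zx4. \<forall>b\<in>Zx4. f (mul4 a b) = mul4 (f a) (f b))
   \<and> (\<forall>j. f ` filt d j = filt d j)
   \<and> (\<forall>n. \<forall>a\<in>Zx4. f (lam k d2 n a) = lam k' d2' n (f a))"

definition iso_filt_lambda :: "nat \<Rightarrow> int \<Rightarrow> int \<Rightarrow> int \<Rightarrow> int \<Rightarrow> bool" where
  "iso_filt_lambda d k d2 k' d2' \<longleftrightarrow> (\<exists>f. filt_lambda_iso d k d2 k' d2' f)"

end

theory Submission
  imports Defs
begin


lemma trunc4_eq_iff: "trunc4 p = trunc4 q \<longleftrightarrow> (\<forall>i<4. coeff p i = coeff q i)"
  unfolding trunc4_def by (simp add: mod_eq_dvd_iff monom_1_dvd_iff')

lemma degree_trunc4: "degree (trunc4 p) < 4"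
proof -
  have "monom (1::rat) 4 \<noteq> 0" by simp
  then have "p mod monom 1 4 = 0 \<or> degree (p mod monom 1 4) < degree (monom (1::rat) 4)"
    using degree_mod_less by blast
  then show ?thesis unfolding trunc4_def by (auto simp: degree_monom_eq)
qed

lemma trunc4_id: "degree p < 4 \<Longrightarrow> trunc4 p = p"
  unfolding trunc4_def by (rule mod_poly_less) (simp add: degree_monom_eq)

lemma trunc4_trunc4[simp]: "trunc4 (trunc4 p) = trunc4 p"
  using trunc4_id degree_trunc4 by blast

lemma coeff_trunc4: "coeff (trunc4 p) i = (if i < 4 then coeff p i else 0)"
proof (cases "i < 4")
  case True
  have "trunc4 (trunc4 p) = trunc4 p" by simp
  then show ?thesis using True by (simp only: trunc4_eq_iff) simp
next
  case False
  then show ?thesis using degree_trunc4[of p] by (simp add: coeff_eq_0)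
qed

lemma trunc4_add: "trunc4 (p + q) = trunc4 p + trunc4 q"
  by (simp add: poly_eq_iff coeff_trunc4)
lemma trunc4_diff: "trunc4 (p - q) = trunc4 p - trunc4 q"
  by (simp add: poly_eq_iff coeff_trunc4)
lemma trunc4_smult: "trunc4 (smult c p) = smult c (trunc4 p)"
  by (simp add: poly_eq_iff coeff_trunc4)
lemma trunc4_sum: "trunc4 (\<Sum>i\<in>A. f i) = (\<Sum>i\<in>A. trunc4 (f i))"
  by (simp add: poly_eq_iff coeff_trunc4 coeff_sum)
lemma trunc4_mult: "trunc4 (p * q) = trunc4 (trunc4 p * trunc4 q)"
  unfolding trunc4_def by (simp add: mod_mult_eq)
lemma trunc4_1[simp]: "trunc4 1 = 1"
  by (rule trunc4_id) simp
lemma trunc4_0[simp]: "trunc4 0 = 0"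
  by (rule trunc4_id) simp

lemma pcompose_pow: "pcompose (p ^ n) q = (pcompose p q) ^ n"
  by (induction n) (simp_all add: pcompose_1 pcompose_mult)

lemma pcomp_congL:
  assumes "trunc4 p = trunc4 p'" "coeff q 0 = 0"
  shows "trunc4 (pcompose p q) = trunc4 (pcompose p' q)"
proof -
  have "monom 1 4 dvd p - p'" using assms(1) unfolding trunc4_def by (simp add: mod_eq_dvd_iff)
  then obtain r where r: "p - p' = monom 1 4 * r" by (elim dvdE)
  have "monom 1 1 dvd q" using assms(2) by (simp add: monom_1_dvd_iff')
  then have "monom 1 1 ^ 4 dvd q ^ 4" by (rule dvd_power_same)
  then have d: "monom 1 4 dvd q ^ 4" by (simp add: monom_power)
  have "pcompose (monom 1 4) q = q ^ 4"
    by (simp add: monom_altdef pcompose_pow pcompose_pCons)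
  then have "pcompose p q - pcompose p' q = q ^ 4 * pcompose r q"
    by (simp flip: pcompose_diff add: r pcompose_mult)
  then have "monom 1 4 dvd pcompose p q - pcompose p' q" using d by simp
  then show ?thesis unfolding trunc4_def by (simp add: mod_eq_dvd_iff)
qed

lemma pcomp_congR:
  assumes "trunc4 q = trunc4 q'"
  shows "trunc4 (pcompose p q) = trunc4 (pcompose p q')"
proof (induction p)
  case (pCons a p)
  then show ?case unfolding pcompose_pCons using assms unfolding trunc4_def
    by (intro mod_add_cong mod_mult_cong) auto
qed simp

lemma trunc4_pcompL: "coeff q 0 = 0 \<Longrightarrow> trunc4 (pcompose (trunc4 p) q) = trunc4 (pcompose p q)"
  by (rule pcomp_congL) simp_all
lemma trunc4_pcompR: "trunc4 (pcompose p (trunc4 q)) = trunc4 (pcompose p q)"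
  by (rule pcomp_congR) simp

lemma compose4:
  "trunc4 (pcompose [:a0,a1,a2,a3:] [:0,b1,b2,b3:]) =
     [:a0, a1*b1, a1*b2 + a2*b1^2, a1*b3 + 2*a2*b1*b2 + a3*b1^3:]"
  by (simp add: poly_eq_iff coeff_trunc4 pcompose_pCons coeff_pCons algebra_simps power2_eq_square power3_eq_cube split: nat.split)


lemma coeff0_pcompose: "coeff q 0 = 0 \<Longrightarrow> coeff (pcompose p q) 0 = coeff p 0"
  by (simp flip: poly_0_coeff_0 add: poly_pcompose)

definition F :: "rat poly \<Rightarrow> rat poly \<Rightarrow> rat poly" where
  "F g a = trunc4 (pcompose a g)"

lemma F_add: "F g (a + b) = F g a + F g b"
  by (simp add: F_def pcompose_add trunc4_add)
lemma F_diff: "F g (a - b) = F g a - F g b"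
  by (simp add: F_def pcompose_diff trunc4_diff)
lemma F_smult: "F g (smult c a) = smult c (F g a)"
  by (simp add: F_def pcompose_smult trunc4_smult)
lemma F_sum: "F g (\<Sum>i\<in>A. f i) = (\<Sum>i\<in>A. F g (f i))"
  by (simp add: F_def pcompose_sum trunc4_sum)
lemma F_1: "F g 1 = 1"
  by (simp add: F_def pcompose_1)
lemma F_mul4: "coeff g 0 = 0 \<Longrightarrow> F g (mul4 a b) = mul4 (F g a) (F g b)"
  unfolding F_def mul4_def
  by (simp add: trunc4_pcompL pcompose_mult flip: trunc4_mult)

lemma coeff0_psi_prime: "coeff (psi_prime k d2 p) 0 = 0"
  by (simp add: psi_prime_def)

lemma fold_commute:
  assumes g0: "coeff g 0 = 0"
    and H: "\<And>p. trunc4 (pcompose (psi_prime k d2 p) g) = trunc4 (pcompose g (psi_prime k' d2' p))"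
  shows "coeff u 0 = 0 \<Longrightarrow> coeff u' 0 = 0 \<Longrightarrow> trunc4 (pcompose u g) = trunc4 (pcompose g u') \<Longrightarrow>
    coeff (fold (\<lambda>p u. trunc4 (pcompose u (psi_prime k d2 p))) ps u) 0 = 0 \<and>
    coeff (fold (\<lambda>p u. trunc4 (pcompose u (psi_prime k' d2' p))) ps u') 0 = 0 \<and>
    trunc4 (pcompose (fold (\<lambda>p u. trunc4 (pcompose u (psi_prime k d2 p))) ps u) g) =
    trunc4 (pcompose g (fold (\<lambda>p u. trunc4 (pcompose u (psi_prime k' d2' p))) ps u'))"
proof (induction ps arbitrary: u u')
  case Nil
  then show ?case by simp
next
  case (Cons p ps)
  define u1 where "u1 = trunc4 (pcompose u (psi_prime k d2 p))"
  define u1' where "u1' = trunc4 (pcompose u' (psi_prime k' d2' p))"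
  have c1: "coeff u1 0 = 0" unfolding u1_def using Cons.prems
    by (simp add: coeff_trunc4 coeff0_pcompose coeff0_psi_prime poly_0_coeff_0)
  have c1': "coeff u1' 0 = 0" unfolding u1'_def using Cons.prems
    by (simp add: coeff_trunc4 coeff0_pcompose coeff0_psi_prime poly_0_coeff_0)
  have "trunc4 (pcompose u1 g) = trunc4 (pcompose (pcompose u (psi_prime k d2 p)) g)"
    unfolding u1_def using g0 by (rule trunc4_pcompL)
  also have "\<dots> = trunc4 (pcompose u (pcompose (psi_prime k d2 p) g))"
    by (simp add: pcompose_assoc)
  also have "\<dots> = trunc4 (pcompose u (pcompose g (psi_prime k' d2' p)))"
    by (rule pcomp_congR) (rule H)
  also have "\<dots> = trunc4 (pcompose (pcompose u g) (psi_prime k' d2' p))"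
    by (simp add: pcompose_assoc)
  also have "\<dots> = trunc4 (pcompose (pcompose g u') (psi_prime k' d2' p))"
    by (rule pcomp_congL) (use Cons.prems coeff0_psi_prime in auto)
  also have "\<dots> = trunc4 (pcompose g u1')"
    unfolding u1'_def by (simp add: trunc4_pcompR pcompose_assoc)
  finally have "trunc4 (pcompose u1 g) = trunc4 (pcompose g u1')" .
  from Cons.IH[OF c1 c1' this] show ?case by (simp add: u1_def u1'_def)
qed

lemma psi_x_commute:
  assumes g0: "coeff g 0 = 0"
    and H: "\<And>p. trunc4 (pcompose (psi_prime k d2 p) g) = trunc4 (pcompose g (psi_prime k' d2' p))"
  shows "coeff (psi_x k' d2' n) 0 = 0 \<and> trunc4 (pcompose (psi_x k d2 n) g) = trunc4 (pcompose g (psi_x k' d2' n))"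
proof -
  have "pcompose [:0,1:] g = g" by (simp add: pcompose_pCons)
  then show ?thesis
  unfolding psi_x_def using fold_commute[OF g0 H, of "[:0,1:]" "[:0,1:]"] by simp
qed

lemma F_adams:
  assumes g0: "coeff g 0 = 0"
    and H: "\<And>p. trunc4 (pcompose (psi_prime k d2 p) g) = trunc4 (pcompose g (psi_prime k' d2' p))"
  shows "F g (adams k d2 n a) = adams k' d2' n (F g a)"
proof -
  note pc = psi_x_commute[OF g0 H, of n]
  have "F g (adams k d2 n a) = trunc4 (pcompose (pcompose a (psi_x k d2 n)) g)"
    unfolding F_def adams_def using g0 by (rule trunc4_pcompL)
  also have "\<dots> = trunc4 (pcompose a (pcompose (psi_x k d2 n) g))" by (simp add: pcompose_assoc)
  also have "\<dots> = trunc4 (pcompose a (pcompose g (psi_x k' d2' n)))"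
    by (rule pcomp_congR) (use pc in auto)
  also have "\<dots> = trunc4 (pcompose (pcompose a g) (psi_x k' d2' n))" by (simp add: pcompose_assoc)
  also have "\<dots> = adams k' d2' n (F g a)"
    unfolding F_def adams_def using pc by (simp add: trunc4_pcompL)
  finally show ?thesis .
qed

lemma length_lams: "length (lams k d2 n a) = Suc n"
  by (induction n) (simp_all add: Let_def)

lemma F_lams:
  assumes g0: "coeff g 0 = 0"
    and H: "\<And>p. trunc4 (pcompose (psi_prime k d2 p) g) = trunc4 (pcompose g (psi_prime k' d2' p))"
  shows "\<forall>i\<le>n. F g (lams k d2 n a ! i) = lams k' d2' n (F g a) ! i"
proof (induction n)
  case 0
  then show ?case by (simp add: F_1)
next
  case (Suc m)
  show ?case
  proof (intro allI impI)
    fix i assume i: "i \<le> Suc m"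
    show "F g (lams k d2 (Suc m) a ! i) = lams k' d2' (Suc m) (F g a) ! i"
    proof (cases "i \<le> m")
      case True
      then show ?thesis using Suc.IH
        by (simp add: Let_def nth_append length_lams)
    next
      case False
      then have i: "i = Suc m" using i by simp
      have "F g (\<Sum>j\<in>{1..Suc m}. smult ((-1) ^ (j - 1))
                (mul4 (adams k d2 j a) (lams k d2 m a ! (Suc m - j)))) =
            (\<Sum>j\<in>{1..Suc m}. smult ((-1) ^ (j - 1))
                (mul4 (adams k' d2' j (F g a)) (lams k' d2' m (F g a) ! (Suc m - j))))"
        unfolding F_sum
      proof (rule sum.cong)
        fix j assume "j \<in> {1..Suc m}"
        then have "Suc m - j \<le> m" by auto
        then show "F g (smult ((-1) ^ (j - 1)) (mul4 (adams k d2 j a) (lams k d2 m a ! (Suc m - j)))) =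
            smult ((-1) ^ (j - 1)) (mul4 (adams k' d2' j (F g a)) (lams k' d2' m (F g a) ! (Suc m - j)))"
          using Suc.IH by (simp add: F_smult F_mul4[OF g0] F_adams[OF g0 H])
      qed simp
      then show ?thesis using i by (simp add: Let_def nth_append length_lams F_smult)
    qed
  qed
qed

lemma F_lam:
  assumes g0: "coeff g 0 = 0"
    and H: "\<And>p. trunc4 (pcompose (psi_prime k d2 p) g) = trunc4 (pcompose g (psi_prime k' d2' p))"
  shows "F g (lam k d2 n a) = lam k' d2' n (F g a)"
  unfolding lam_def using F_lams[OF g0 H, of n a] by simp



lemma expand4: "degree a < 4 \<Longrightarrow> a = [:coeff a 0, coeff a 1, coeff a 2, coeff a 3:]"
  proof (rule poly_eqI)
  fix n assume "degree a < 4"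
  then show "coeff a n = coeff [:coeff a 0, coeff a 1, coeff a 2, coeff a 3:] n"
  proof (cases "n < 4")
    case True
    then have "n = 0 \<or> n = 1 \<or> n = 2 \<or> n = 3" by auto
    then show ?thesis by (auto simp: numeral_2_eq_2 numeral_3_eq_3)
  next
    case False
    then have "degree a < n" "degree [:coeff a 0, coeff a 1, coeff a 2, coeff a 3:] < n"
      using \<open>degree a < 4\<close> by (auto intro: le_less_trans[OF degree_pCons_le] simp: degree_pCons_le)
    then show ?thesis by (simp add: coeff_eq_0)
  qed
qed

lemma all4: "(\<forall>i<4. P i) \<longleftrightarrow> P 0 \<and> P 1 \<and> P 2 \<and> P (3::nat)"
  by (auto simp: less_Suc_eq numeral_eq_Suc)

lemma coeff_hi: "degree a < 4 \<Longrightarrow> \<not> i < 4 \<Longrightarrow> coeff a i = 0"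
  by (rule coeff_eq_0) simp

lemma Zx4_iff: "a \<in> Zx4 \<longleftrightarrow> degree a < 4 \<and> (\<forall>i<4. coeff a i \<in> \<int>)"
proof
  assume "a \<in> Zx4" then show "degree a < 4 \<and> (\<forall>i<4. coeff a i \<in> \<int>)" by (simp add: Zx4_def)
next
  assume H: "degree a < 4 \<and> (\<forall>i<4. coeff a i \<in> \<int>)"
  have "coeff a i \<in> \<int>" for i
  proof (cases "i < 4")
    case True then show ?thesis using H by blast
  next
    case False then show ?thesis using H coeff_hi[of a i] by simp
  qed
  then show "a \<in> Zx4" using H by (simp add: Zx4_def)
qed

lemma filt_iff: "a \<in> filt d j \<longleftrightarrow> a \<in> Zx4 \<and> (\<forall>i<4. i * d < j \<longrightarrow> coeff a i = 0)"
proof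
  assume "a \<in> filt d j" then show "a \<in> Zx4 \<and> (\<forall>i<4. i * d < j \<longrightarrow> coeff a i = 0)" by (simp add: filt_def)
next
  assume H: "a \<in> Zx4 \<and> (\<forall>i<4. i * d < j \<longrightarrow> coeff a i = 0)"
  have "i * d < j \<longrightarrow> coeff a i = 0" for i
  proof (cases "i < 4")
    case True then show ?thesis using H by blast
  next
    case False then show ?thesis using H coeff_hi[of a i] by (simp add: Zx4_def)
  qed
  then show "a \<in> filt d j" using H by (simp add: filt_def)
qed

lemma coeff_lit:
  "coeff [:a0,a1,a2,a3:] 0 = a0" "coeff [:a0,a1,a2,a3:] 1 = a1"
  "coeff [:a0,a1,a2,a3:] 2 = a2" "coeff [:a0,a1,a2,a3:] 3 = a3"
  by (simp_all only: numeral_2_eq_2 numeral_3_eq_3 One_nat_def coeff_pCons_0 coeff_pCons_Suc)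

lemma degree_lit: "degree [:a0,a1,a2,a3:] < 4"
proof -
  have "degree [:a0,a1,a2,a3:] \<le> 3"
    by (rule degree_le) (auto simp: coeff_pCons numeral_3_eq_3 split: nat.split)
  then show ?thesis by simp
qed

lemma lit_Zx4: "[:a0,a1,a2,a3:] \<in> Zx4 \<longleftrightarrow> a0 \<in> \<int> \<and> a1 \<in> \<int> \<and> a2 \<in> \<int> \<and> a3 \<in> \<int>"
  unfolding Zx4_iff all4 coeff_lit using degree_lit by blast

lemma lit_filt: "[:a0,a1,a2,a3:] \<in> filt d j \<longleftrightarrow> [:a0,a1,a2,a3:] \<in> Zx4 \<and>
   (0 < j \<longrightarrow> a0 = 0) \<and> (d < j \<longrightarrow> a1 = 0) \<and> (2*d < j \<longrightarrow> a2 = 0) \<and> (3*d < j \<longrightarrow> a3 = 0)"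
  unfolding filt_iff all4 coeff_lit by simp

lemma F_lit: "F [:0,1,0,B:] [:a0,a1,a2,a3:] = [:a0,a1,a2,a1*B+a3:]"
  unfolding F_def by (subst compose4) simp

lemma F_lit_expand:
  assumes "a \<in> Zx4"
  shows "F [:0,1,0,B:] a = [:coeff a 0, coeff a 1, coeff a 2, coeff a 1 * B + coeff a 3:]"
proof -
  have a: "a = [:coeff a 0, coeff a 1, coeff a 2, coeff a 3:]" using assms by (intro expand4) (simp add: Zx4_def)
  show ?thesis by (rule trans[OF arg_cong[OF a, of "F [:0,1,0,B:]"] F_lit])
qed

lemma F_lit_Zx4:
  assumes "B \<in> \<int>" "a \<in> Zx4" shows "F [:0,1,0,B:] a \<in> Zx4"
proof -
  have "coeff a i \<in> \<int>" for i using assms(2) by (simp add: Zx4_def)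
  then show ?thesis using assms(1) unfolding F_lit_expand[OF assms(2)] lit_Zx4 by simp
qed

lemma F_lit_filt:
  assumes "B \<in> \<int>" "a \<in> filt d j" shows "F [:0,1,0,B:] a \<in> filt d j"
proof -
  have Z: "a \<in> Zx4" using assms(2) by (simp add: filt_iff)
  have a: "a = [:coeff a 0, coeff a 1, coeff a 2, coeff a 3:]" using Z by (intro expand4) (simp add: Zx4_def)
  have "[:coeff a 0, coeff a 1, coeff a 2, coeff a 3:] \<in> filt d j" using assms(2) a by simp
  then have z: "(0 < j \<longrightarrow> coeff a 0 = 0) \<and> (d < j \<longrightarrow> coeff a 1 = 0) \<and> (2*d < j \<longrightarrow> coeff a 2 = 0) \<and> (3*d < j \<longrightarrow> coeff a 3 = 0)"
    unfolding lit_filt by blast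
  have "3 * d < j \<Longrightarrow> coeff a 1 = 0" using z by auto
  then show ?thesis using z F_lit_Zx4[OF assms(1) Z] unfolding F_lit_expand[OF Z] lit_filt by simp
qed

lemma F_inv:
  assumes "a \<in> Zx4" shows "F [:0,1,0,B:] (F [:0,1,0,-B:] a) = a"
proof -
  have a: "a = [:coeff a 0, coeff a 1, coeff a 2, coeff a 3:]" using assms by (intro expand4) (simp add: Zx4_def)
  show ?thesis unfolding F_lit_expand[OF assms] F_lit by (subst (5) a) simp
qed

lemma H_backward:
  assumes "of_int d2 - of_int d2' = (60::rat) * B"
  shows "trunc4 (pcompose (psi_prime k d2 p) [:0,1,0,B:]) = trunc4 (pcompose [:0,1,0,B:] (psi_prime k d2' p))"
proof -
  define P :: rat where "P = of_nat (p^2)"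
  have D: "dcoef k d2 p - dcoef k d2' p = B * (P^3 - P)"
  proof (cases "p = 2")
    case True
    then show ?thesis using assms by (simp add: dcoef_def P_def)
  next
    case False
    have e: "(of_nat (p^2 * (p^4 - 1)) :: rat) = P^3 - P"
    proof (cases "p = 0")
      case True then show ?thesis by (simp add: P_def)
    next
      case False
      then have "1 \<le> p^4" by simp
      then have "(of_nat (p^2 * (p^4 - 1)) :: rat) = of_nat p ^ 2 * (of_nat p ^ 4 - 1)"
        by (simp only: of_nat_mult of_nat_diff of_nat_power of_nat_1)
      then show ?thesis by (simp add: P_def algebra_simps flip: power_add power_mult)
    qed
    have "dcoef k d2 p - dcoef k d2' p = of_nat (p^2 * (p^4 - 1)) * (of_int d2 - of_int d2') / 60"
      using False by (simp add: dcoef_def algebra_simps diff_divide_distrib)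
    then show ?thesis using assms e by simp
  qed
  have l: "trunc4 (pcompose (psi_prime k d2 p) [:0,1,0,B:]) =
     [:0, P, of_int k * of_nat (p^2 * (p^2 - 1)) / 12, P * B + dcoef k d2 p:]"
    unfolding psi_prime_def P_def by (subst compose4) (simp add: algebra_simps)
  have r: "trunc4 (pcompose [:0,1,0,B:] (psi_prime k d2' p)) =
     [:0, P, of_int k * of_nat (p^2 * (p^2 - 1)) / 12, dcoef k d2' p + B * P^3:]"
    unfolding psi_prime_def P_def by (subst compose4) (simp add: algebra_simps)
  have "P * B + dcoef k d2 p = dcoef k d2' p + B * P^3" using D by (simp add: algebra_simps)
  then show ?thesis using l r by simp
qed


lemma backward:
  assumes "d2 mod 60 = d2' mod 60"
  shows "iso_filt_lambda d k d2 k d2'"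
proof -
  have "(60::int) dvd d2 - d2'" using assms by (simp add: mod_eq_dvd_iff)
  then obtain B where B: "d2 - d2' = 60 * B" by (elim dvdE)
  define g where "g = [:0,1,0,rat_of_int B:]"
  define h where "h = [:0,1,0,- rat_of_int B:]"
  have BZ: "rat_of_int B \<in> \<int>" "- rat_of_int B \<in> \<int>" by simp_all
  have g0: "coeff g 0 = 0" by (simp add: g_def)
  have H: "\<And>p. trunc4 (pcompose (psi_prime k d2 p) g) = trunc4 (pcompose g (psi_prime k d2' p))"
    unfolding g_def by (rule H_backward) (simp add: B flip: of_int_diff)
  have inv1: "F g (F h a) = a" if "a \<in> Zx4" for a
    unfolding g_def h_def using F_inv[OF that] .
  have inv2: "F h (F g a) = a" if "a \<in> Zx4" for a
    unfolding g_def h_def using F_inv[OF that, of "- rat_of_int B"] by simp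
  have gZ: "F g a \<in> Zx4" if "a \<in> Zx4" for a unfolding g_def using F_lit_Zx4[OF BZ(1) that] .
  have hZ: "F h a \<in> Zx4" if "a \<in> Zx4" for a unfolding h_def using F_lit_Zx4[OF BZ(2) that] .
  have gF: "F g a \<in> filt d j" if "a \<in> filt d j" for a j unfolding g_def using F_lit_filt[OF BZ(1) that] .
  have hF: "F h a \<in> filt d j" if "a \<in> filt d j" for a j unfolding h_def using F_lit_filt[OF BZ(2) that] .
  have "filt_lambda_iso d k d2 k d2' (F g)"
    unfolding filt_lambda_iso_def
  proof (intro conjI ballI allI)
    show "bij_betw (F g) Zx4 Zx4"
      by (rule bij_betw_byWitness[where f'="F h"]) (use inv1 inv2 gZ hZ in auto)
    show "F g 1 = 1" by (rule F_1)
    show "F g (a + b) = F g a + F g b" for a b by (rule F_add)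
    show "F g (mul4 a b) = mul4 (F g a) (F g b)" for a b by (rule F_mul4[OF g0])
    show "F g (lam k d2 n a) = lam k d2' n (F g a)" for n a by (rule F_lam[OF g0 H])
    show "F g ` filt d j = filt d j" for j
    proof
      show "F g ` filt d j \<subseteq> filt d j" using gF by auto
      show "filt d j \<subseteq> F g ` filt d j"
      proof
        fix b assume b: "b \<in> filt d j"
        then have "b = F g (F h b)" using inv1 by (simp add: filt_def)
        then show "b \<in> F g ` filt d j" using hF[OF b] by blast
      qed
    qed
  qed
  then show ?thesis unfolding iso_filt_lambda_def by blast
qed


lemma mul4_lit: "mul4 [:0,a1,a2,a3:] [:0,b1,b2,b3:] = [:0,0,a1*b1,a1*b2+a2*b1:]"
  by (simp add: mul4_def poly_eq_iff coeff_trunc4 coeff_pCons algebra_simps split: nat.split)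

lemma psi_x_2: "psi_x k d2 2 = [:0, 4, of_int k, of_int d2:]"
proof -
  have "prime_factorization (2::nat) = {#2#}" by (rule prime_factorization_prime) simp
  then have "psi_x k d2 2 = trunc4 (pcompose [:0,1:] (psi_prime k d2 2))"
    by (simp add: psi_x_def)
  also have "\<dots> = trunc4 (psi_prime k d2 2)" by (simp add: pcompose_pCons)
  also have "psi_prime k d2 2 = [:0, 4, of_int k, of_int d2:]"
    by (simp add: psi_prime_def dcoef_def)
  finally show ?thesis using trunc4_id[OF degree_lit] by simp
qed

lemma psi_x_1: "psi_x k d2 (Suc 0) = [:0, 1:]"
  by (simp add: psi_x_def)

lemma lam2: "degree a < 4 \<Longrightarrow> smult 2 (lam k d2 2 a) = mul4 a a - adams k d2 2 a"
  by (simp add: lam_def numeral_2_eq_2 Let_def adams_def psi_x_1 trunc4_id mul4_def)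


lemma Zx4_add: "a \<in> Zx4 \<Longrightarrow> b \<in> Zx4 \<Longrightarrow> a + b \<in> Zx4"
  unfolding Zx4_def by (auto intro: le_less_trans[OF degree_add_le_max])
lemma Zx4_uminus: "a \<in> Zx4 \<Longrightarrow> - a \<in> Zx4"
  unfolding Zx4_def by auto
lemma Zx4_smult: "c \<in> \<int> \<Longrightarrow> a \<in> Zx4 \<Longrightarrow> smult c a \<in> Zx4"
  unfolding Zx4_def by (auto intro: le_less_trans[OF degree_smult_le])
lemma Zx4_mul4: "a \<in> Zx4 \<Longrightarrow> b \<in> Zx4 \<Longrightarrow> mul4 a b \<in> Zx4"
  unfolding Zx4_def mul4_def
  by (auto simp: degree_trunc4 coeff_trunc4 coeff_mult intro!: Ints_sum Ints_mult)

lemma X_Zx4: "[:0,1:] \<in> Zx4"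
  unfolding Zx4_def by (auto simp: coeff_pCons split: nat.split)

lemma forward:
  assumes iso: "filt_lambda_iso d k d2 k' d2' f"
    and d: "d > 0" and k: "k \<in> {1, 5}" and k': "k' \<in> {1, 5}" and e2: "even d2"
  shows "k = k' \<and> d2 mod 60 = d2' mod 60"
proof -
  have bij: "bij_betw f Zx4 Zx4" and one: "f 1 = 1"
    and add: "\<And>a b. a \<in> Zx4 \<Longrightarrow> b \<in> Zx4 \<Longrightarrow> f (a + b) = f a + f b"
    and mul: "\<And>a b. a \<in> Zx4 \<Longrightarrow> b \<in> Zx4 \<Longrightarrow> f (mul4 a b) = mul4 (f a) (f b)"
    and fil: "\<And>j. f ` filt d j = filt d j"
    and lm: "\<And>n a. a \<in> Zx4 \<Longrightarrow> f (lam k d2 n a) = lam k' d2' n (f a)"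
    using iso unfolding filt_lambda_iso_def by auto
  have fZ: "f a \<in> Zx4" if "a \<in> Zx4" for a using bij that by (rule bij_betw_apply)
  have Z0: "0 \<in> Zx4" by (simp add: Zx4_def)
  have f0: "f 0 = 0" using add[OF Z0 Z0] by simp
  have fneg: "f (- a) = - f a" if "a \<in> Zx4" for a
  proof -
    have "f (a + - a) = f a + f (- a)" by (rule add[OF that Zx4_uminus[OF that]])
    then have "f a + f (- a) = 0" using f0 by simp
    then show ?thesis by (simp add: eq_neg_iff_add_eq_0 add.commute)
  qed
  have fnat: "f (smult (of_nat n) a) = smult (of_nat n) (f a)" if "a \<in> Zx4" for a n
  proof (induction n)
    case 0 then show ?case using f0 by simp
  next
    case (Suc n)
    have "smult (of_nat (Suc n)) a = a + smult (of_nat n) a" by (simp add: smult_add_left)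
    moreover have "smult (of_nat n) a \<in> Zx4" using that by (intro Zx4_smult) auto
    moreover have "f (a + smult (of_nat n) a) = f a + f (smult (of_nat n) a)"
      by (rule add[OF that \<open>smult (of_nat n) a \<in> Zx4\<close>])
    ultimately have "f (smult (of_nat (Suc n)) a) = f a + f (smult (of_nat n) a)"
      by simp
    then show ?case using Suc by (simp add: smult_add_left)
  qed
  have fint: "f (smult (of_int n) a) = smult (of_int n) (f a)" if "a \<in> Zx4" for a n
  proof (cases "n \<ge> 0")
    case True
    then obtain m where "n = int m" using nonneg_int_cases by blast
    then show ?thesis using fnat[OF that, of m] by simp
  next
    case False
    define m where "m = nat (- n)"
    have m: "n = - int m" using False by (simp add: m_def)
    have "smult (of_nat m) a \<in> Zx4" using that by (intro Zx4_smult) auto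
    then show ?thesis using fnat[OF that, of m] fneg m by simp
  qed
  define X :: "rat poly" where "X = [:0,1:]"
  have XZ: "X \<in> Zx4" unfolding X_def by (rule X_Zx4)
  have Xf: "X \<in> filt d 1" using XZ d unfolding filt_iff X_def
    by (auto simp: coeff_pCons split: nat.split)
  define g where "g = f X"
  have gf: "g \<in> filt d 1" using Xf fil[of 1] unfolding g_def by blast
  then have gZ: "g \<in> Zx4" by (simp add: filt_iff)
  have g0: "coeff g 0 = 0" using gf unfolding filt_def by auto
  have gexp: "g = [:0, coeff g 1, coeff g 2, coeff g 3:]"
    using expand4[of g] gZ g0 by (simp add: Zx4_def)
  have "coeff g 1 \<in> \<int>" "coeff g 2 \<in> \<int>" "coeff g 3 \<in> \<int>" using gZ by (simp_all add: Zx4_def)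
  then obtain E A Bc where E: "coeff g 1 = of_int E" and A: "coeff g 2 = of_int A" and Bc: "coeff g 3 = of_int Bc"
    by (metis Ints_cases)
  obtain h where hf: "h \<in> filt d 1" and fh: "f h = X" using Xf fil[of 1] by (metis imageE)
  have hZ: "h \<in> Zx4" using hf by (simp add: filt_iff)
  have h0: "coeff h 0 = 0" using hf unfolding filt_def by auto
  have "coeff h 1 \<in> \<int>" using hZ by (simp add: Zx4_def)
  then obtain H1 where H1: "coeff h 1 = of_int H1" by (metis Ints_cases)
  define r where "r = [:0, 0, coeff h 2, coeff h 3:]"
  have rZ: "r \<in> Zx4" using hZ unfolding r_def lit_Zx4 by (simp add: Zx4_def)
  have rf: "r \<in> filt d (d + 1)" using rZ d unfolding r_def lit_filt by simp
  have hexp: "h = smult (of_int H1) X + r"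
  proof -
    have "h = [:0, coeff h 1, coeff h 2, coeff h 3:]"
      using expand4[of h] hZ h0 by (simp add: Zx4_def)
    then show ?thesis unfolding r_def X_def H1 by simp
  qed
  have "X = f (smult (of_int H1) X) + f r"
    using fh hexp add[OF Zx4_smult[OF _ XZ] rZ] by simp
  also have "\<dots> = smult (of_int H1) g + f r" using fint[OF XZ] g_def by simp
  finally have "coeff X 1 = coeff (smult (of_int H1) g + f r) 1" by simp
  moreover have "f r \<in> filt d (d + 1)" using rf fil[of "d+1"] by blast
  then have "coeff (f r) 1 = 0" by (simp add: filt_iff)
  ultimately have "1 = of_int H1 * (of_int E :: rat)" using E by (simp add: X_def)
  then have "H1 * E = 1" by (metis of_int_1 of_int_eq_iff of_int_mult)
  then have Eu: "E = 1 \<or> E = -1" using zmult_eq_1_iff by blast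
  have X4: "X = [:0,1,0,0:]" by (simp add: X_def)
  have XX: "mul4 X X = [:0,0,1,0:]" unfolding X4 mul4_lit by simp
  have XXX: "mul4 X (mul4 X X) = [:0,0,0,1:]" unfolding XX unfolding X4 mul4_lit by simp
  define P where "P = adams k d2 2 X"
  have P: "P = [:0,4,of_int k, of_int d2:]" unfolding P_def adams_def psi_x_2 X_def
    by (simp add: pcompose_pCons trunc4_id[OF degree_lit])
  have PZ: "P \<in> Zx4" unfolding P lit_Zx4 by simp
  have Pdec: "P = smult 4 X + smult (of_int k) (mul4 X X) + smult (of_int d2) (mul4 X (mul4 X X))"
    unfolding P unfolding XXX unfolding XX unfolding X4 by simp
  define L where "L = lam k d2 2 X"
  have L2: "smult 2 L = mul4 X X - P" unfolding L_def P_def by (rule lam2) (simp add: X_def)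
  have Lexp: "L = [:0, -2, (1 - of_int k)/2, - of_int d2 / 2:]"
  proof -
    have "L = smult (1/2) (smult 2 L)" by simp
    also have "\<dots> = [:0, -2, (1 - of_int k)/2, - of_int d2 / 2:]" unfolding L2 XX P by simp
    finally show ?thesis .
  qed
  have kZ: "(1 - rat_of_int k) / 2 \<in> \<int>" using k by auto
  obtain m where m: "d2 = 2 * m" using e2 by (elim evenE)
  have dZ: "- rat_of_int d2 / 2 \<in> \<int>" unfolding m by simp
  have LZ: "L \<in> Zx4" unfolding Lexp lit_Zx4 using kZ dZ by simp
  have twice: "smult 2 p = p + p" for p :: "rat poly"
    using smult_add_left[of 1 1 p] by (simp add: one_add_one)
  have "mul4 X X = P + (L + L)" using L2 twice[of L] by (simp add: algebra_simps)
  then have "f (mul4 X X) = f P + (f L + f L)"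
    using add[OF PZ Zx4_add[OF LZ LZ]] add[OF LZ LZ] by simp
  moreover have "f (mul4 X X) = mul4 g g" using mul[OF XZ XZ] g_def by simp
  moreover have "f L = lam k' d2' 2 g" unfolding L_def g_def by (rule lm[OF XZ])
  moreover have "smult 2 (lam k' d2' 2 g) = mul4 g g - adams k' d2' 2 g"
    by (rule lam2) (use gZ in \<open>simp add: Zx4_def\<close>)
  ultimately have fP: "f P = adams k' d2' 2 g" using twice[of "lam k' d2' 2 g"] by (simp add: algebra_simps)
  have XXZ: "mul4 X X \<in> Zx4" by (rule Zx4_mul4[OF XZ XZ])
  have XXXZ: "mul4 X (mul4 X X) \<in> Zx4" by (rule Zx4_mul4[OF XZ XXZ])
  have "f P = f (smult (of_int 4) X) + f (smult (of_int k) (mul4 X X)) + f (smult (of_int d2) (mul4 X (mul4 X X)))"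
    unfolding Pdec using add Zx4_add Zx4_smult XZ XXZ XXXZ by (metis Ints_of_int of_int_numeral)
  also have "\<dots> = smult 4 g + smult (of_int k) (mul4 g g) + smult (of_int d2) (mul4 g (mul4 g g))"
    using fint[OF XZ, of 4] fint[OF XXZ, of k] fint[OF XXXZ, of d2] g_def
    by (simp add: mul[OF XZ XXZ] mul[OF XZ XZ])
  finally have eq: "smult 4 g + smult (of_int k) (mul4 g g) + smult (of_int d2) (mul4 g (mul4 g g)) =
     adams k' d2' 2 g" using fP by simp
  define e a b where "e = rat_of_int E" and "a = rat_of_int A" and "b = rat_of_int Bc"
  have g4: "g = [:0, e, a, b:]" using gexp E A Bc by (simp add: e_def a_def b_def)
  have gg: "mul4 g g = [:0,0,e*e, e*a+a*e:]" unfolding g4 mul4_lit ..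
  have ggg: "mul4 g (mul4 g g) = [:0,0,0,e*(e*e):]" unfolding gg unfolding g4 mul4_lit by simp
  have ad: "adams k' d2' 2 g = [:0, e*4, e*of_int k' + a*4^2, e * of_int d2' + 2*a*4*of_int k' + b*4^3:]"
    unfolding adams_def psi_x_2 unfolding g4 compose4 ..
  have c2: "4*a + of_int k * (e*e) = e*of_int k' + a*16"
    using arg_cong[OF eq, of "\<lambda>p. coeff p 2"] unfolding ggg unfolding gg ad unfolding g4 by (simp add: coeff_lit)
  have c3: "4*b + of_int k * (e*a+a*e) + of_int d2 * (e*(e*e)) = e * of_int d2' + 2*a*4*of_int k' + b*64"
    using arg_cong[OF eq, of "\<lambda>p. coeff p 3"] unfolding ggg unfolding gg ad unfolding g4 by (simp add: coeff_lit)
  have "rat_of_int (4*A + k*(E*E)) = rat_of_int (E*k' + A*16)" using c2 by (simp add: e_def a_def)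
  then have c2i: "4*A + k*(E*E) = E*k' + A*16" by (simp only: of_int_eq_iff)
  have "rat_of_int (4*Bc + k*(E*A+A*E) + d2*(E*(E*E))) = rat_of_int (E*d2' + 2*A*4*k' + Bc*64)"
    using c3 by (simp add: e_def a_def b_def)
  then have c3i: "4*Bc + k*(E*A+A*E) + d2*(E*(E*E)) = E*d2' + 2*A*4*k' + Bc*64" by (simp only: of_int_eq_iff)
  from Eu show ?thesis
  proof
    assume E1: "E = 1"
    then have "k - k' = 12 * A" using c2i by simp
    then have "A = 0 \<and> k = k'" using k k' by (auto; presburger)
    then have "d2 = d2' + 60 * Bc" using c3i E1 by simp
    then show ?thesis using \<open>A = 0 \<and> k = k'\<close> by simp
  next
    assume E1: "E = -1"
    then have "k + k' = 12 * A" using c2i by simp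
    then have False using k k' by (auto; presburger)
    then show ?thesis ..
  qed
qed


theorem lemma4p2:
  fixes d :: nat and k k' d2 d2' :: int
  assumes "d > 0"
    and "k \<in> {1, 5}" and "k' \<in> {1, 5}"
    and "even d2" and "even d2'"
  shows "iso_filt_lambda d k d2 k' d2' \<longleftrightarrow> k = k' \<and> d2 mod 60 = d2' mod 60"
proof
  assume "iso_filt_lambda d k d2 k' d2'"
  then obtain f where "filt_lambda_iso d k d2 k' d2' f" unfolding iso_filt_lambda_def by blast
  then show "k = k' \<and> d2 mod 60 = d2' mod 60" using forward assms by blast
next
  assume "k = k' \<and> d2 mod 60 = d2' mod 60"
  then show "iso_filt_lambda d k d2 k' d2'" using backward by blast
qed

end
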